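(* Let $m\ge 2$ and let $n_1,\dots,n_m\ge 3$ be odd integers. Then the partition dimension of the odd chain cycle $\mathcal{C}(C_{n_1},\dots,C_{n_m})$ equals $3$.
   Context: Let $C_{n_1},\dots,C_{n_m}$ be pairwise disjoint cycles, $V(C_{n_i})=\{v^i_1,\dots,v^i_{n_i}\}$ with $v^i_j$ adjacent to $v^i_{j+1}$ (indices mod $n_i$). The odd chain cycle $\mathcal{C}(C_{n_1},\dots,C_{n_m})$ (all $n_i$ odd) is obtained from the disjoint union of these cycles by identifying $v^i_{(n_i+1)/2+1}$ with $v^{i+1}_1$ for each $i=1,\dots,m-1$. For an ordered partition $\Pi=\{Q_1,\dots,Q_k\}$ of $V(G)$, $r(v\mid\Pi)=(d(v,Q_1),\dots,d(v,Q_k))$ where $d(v,Q)=\min_{q\in Q}d(v,q)$; $\Pi$ is resolving if distinct vertices have distinct representations; the partition dimension $pd(G)$ is the minimum $k$ for which a resolving $k$-partition exists. *)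

theory Defs
  imports Main
begin

inductive walk :: "('a \<Rightarrow> 'a \<Rightarrow> bool) \<Rightarrow> nat \<Rightarrow> 'a \<Rightarrow> 'a \<Rightarrow> bool" for E where
  walk0: "walk E 0 u u"
| walkS: "E u w \<Longrightarrow> walk E k w v \<Longrightarrow> walk E (Suc k) u v"

definition gdist :: "('a \<Rightarrow> 'a \<Rightarrow> bool) \<Rightarrow> 'a \<Rightarrow> 'a \<Rightarrow> nat" where
  "gdist E u v = (LEAST k. walk E k u v)"

definition setdist :: "('a \<Rightarrow> 'a \<Rightarrow> bool) \<Rightarrow> 'a \<Rightarrow> 'a set \<Rightarrow> nat" where
  "setdist E v Q = Min (gdist E v ` Q)"

definition ordered_partition :: "'a set \<Rightarrow> 'a set list \<Rightarrow> bool" where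
  "ordered_partition V P \<longleftrightarrow>
     (\<forall>Q\<in>set P. Q \<noteq> {}) \<and> \<Union>(set P) = V \<and>
     (\<forall>i<length P. \<forall>j<length P. i \<noteq> j \<longrightarrow> P!i \<inter> P!j = {})"

definition representation :: "('a \<Rightarrow> 'a \<Rightarrow> bool) \<Rightarrow> 'a set list \<Rightarrow> 'a \<Rightarrow> nat list" where
  "representation E P v = map (setdist E v) P"

definition resolving_partition :: "'a set \<Rightarrow> ('a \<Rightarrow> 'a \<Rightarrow> bool) \<Rightarrow> 'a set list \<Rightarrow> bool" where
  "resolving_partition V E P \<longleftrightarrow>
     ordered_partition V P \<and> inj_on (representation E P) V"

definition partition_dimension :: "'a set \<Rightarrow> ('a \<Rightarrow> 'a \<Rightarrow> bool) \<Rightarrow> nat" where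
  "partition_dimension V E = (LEAST k. \<exists>P. length P = k \<and> resolving_partition V E P)"

text \<open>Cycle i (1 \<le> i \<le> m) has vertices v^i_j = (i,j), 1 \<le> j \<le> n i.  The identification of
  v^i_{(n_i+1)/2+1} with v^{i+1}_1 is realised by mapping v^{i+1}_1 (i \<ge> 1) to the
  representative (i, (n i + 1) div 2 + 1).\<close>

definition occ_rep :: "(nat \<Rightarrow> nat) \<Rightarrow> nat \<times> nat \<Rightarrow> nat \<times> nat" where
  "occ_rep n x = (case x of (i, j) \<Rightarrow>
      if 2 \<le> i \<and> j = 1 then (i - 1, (n (i - 1) + 1) div 2 + 1) else (i, j))"

definition occ_vertices :: "nat \<Rightarrow> (nat \<Rightarrow> nat) \<Rightarrow> (nat \<times> nat) set" where
  "occ_vertices m n = occ_rep n ` {(i, j). 1 \<le> i \<and> i \<le> m \<and> 1 \<le> j \<and> j \<le> n i}"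

definition occ_cycle_edge :: "nat \<Rightarrow> (nat \<Rightarrow> nat) \<Rightarrow> nat \<times> nat \<Rightarrow> nat \<times> nat \<Rightarrow> bool" where
  "occ_cycle_edge m n u v \<longleftrightarrow>
     (\<exists>i j. 1 \<le> i \<and> i \<le> m \<and> 1 \<le> j \<and> j \<le> n i \<and>
        u = occ_rep n (i, j) \<and> v = occ_rep n (i, j mod n i + 1))"

definition occ_edge :: "nat \<Rightarrow> (nat \<Rightarrow> nat) \<Rightarrow> nat \<times> nat \<Rightarrow> nat \<times> nat \<Rightarrow> bool" where
  "occ_edge m n u v \<longleftrightarrow> occ_cycle_edge m n u v \<or> occ_cycle_edge m n v u"

end

theory Submission
  imports Defs
begin

lemma walk_append: "walk E k1 u w \<Longrightarrow> walk E k2 w v \<Longrightarrow> walk E (k1+k2) u v"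
  by (induction rule: walk.induct) (auto intro: walk.intros)

lemma walk_snoc: "walk E k u w \<Longrightarrow> E w v \<Longrightarrow> walk E (Suc k) u v"
  using walk_append[of E k u w 1 v] by (auto intro: walk.intros)

lemma walk_rev: assumes sym: "\<And>x y. E x y \<Longrightarrow> E y x"
  shows "walk E k u v \<Longrightarrow> walk E k v u"
  by (induction rule: walk.induct) (auto intro: walk.intros walk_snoc sym)

lemma walk0_eq: "walk E 0 u v \<Longrightarrow> u = v"
  by (erule walk.cases) auto

lemma gdist_self: "gdist E u u = 0"
  unfolding gdist_def by (rule Least_eq_0) (rule walk0)

lemma gdist_walk: "walk E k u v \<Longrightarrow> walk E (gdist E u v) u v \<and> gdist E u v \<le> k"
  unfolding gdist_def by (auto intro: LeastI Least_le)

lemma gdist_0: "walk E k u v \<Longrightarrow> gdist E u v = 0 \<Longrightarrow> u = v"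
  using gdist_walk walk0_eq by metis

lemma gdist_1: "E u v \<Longrightarrow> u \<noteq> v \<Longrightarrow> gdist E u v = 1"
proof -
  assume e: "E u v" and ne: "u \<noteq> v"
  have w: "walk E 1 u v" using e by (auto intro: walk.intros)
  from gdist_walk[OF w] have "gdist E u v \<le> 1" by auto
  moreover have "gdist E u v \<noteq> 0" using gdist_0[OF w] ne by auto
  ultimately show ?thesis by auto
qed

lemma setdist_mem: "finite Q \<Longrightarrow> u \<in> Q \<Longrightarrow> setdist E u Q = 0"
  unfolding setdist_def using gdist_self
  by (metis Min_le finite_imageI image_eqI le_zero_eq)

lemma setdist_single: "setdist E u {x} = gdist E u x"
  unfolding setdist_def by simp

lemma setdist_zero: "finite Q \<Longrightarrow> Q \<noteq> {} \<Longrightarrow> (\<And>q. q \<in> Q \<Longrightarrow> \<exists>k. walk E k u q)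
   \<Longrightarrow> setdist E u Q = 0 \<Longrightarrow> u \<in> Q"
  unfolding setdist_def
  by (metis (no_types, lifting) Min_in empty_is_image finite_imageI gdist_0 imageE)

lemma setdist_one: "finite Q \<Longrightarrow> u \<notin> Q \<Longrightarrow> (\<And>q. q \<in> Q \<Longrightarrow> \<exists>k. walk E k u q)
   \<Longrightarrow> q0 \<in> Q \<Longrightarrow> E u q0 \<Longrightarrow> setdist E u Q = 1"
proof -
  assume f: "finite Q" and nu: "u \<notin> Q" and wk: "\<And>q. q \<in> Q \<Longrightarrow> \<exists>k. walk E k u q"
    and q0: "q0 \<in> Q" and e: "E u q0"
  have g1: "gdist E u q0 = 1" using gdist_1[of E u q0, OF e] nu q0 by auto
  have ge: "\<And>q. q \<in> Q \<Longrightarrow> 1 \<le> gdist E u q"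
    using wk gdist_0 nu by (metis less_one not_less)
  show ?thesis unfolding setdist_def
    by (rule Min_eqI) (use f g1 ge q0 in \<open>auto intro: image_eqI[of _ _ q0]\<close>)
qed

locale occ =
  fixes m :: nat and n :: "nat \<Rightarrow> nat"
  assumes m2: "m \<ge> 2" and nodd: "\<forall>i\<in>{1..m}. odd (n i) \<and> n i \<ge> 3"
begin

definition D where "D a = (\<Sum>l\<in>{1..<a}. n l div 2)"
definition F where "F p = D (fst p) + min (snd p - 1) (n (fst p) + 1 - snd p)"

lemma n_eq: "1 \<le> i \<Longrightarrow> i \<le> m \<Longrightarrow> n i = 2 * (n i div 2) + 1 \<and> n i div 2 \<ge> 1"
proof -
  assume "1 \<le> i" "i \<le> m"
  then have o: "odd (n i)" and g: "n i \<ge> 3" using nodd by auto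
  from o have "n i = 2 * (n i div 2) + 1" by presburger
  then show ?thesis using g by linarith
qed

lemma D_Suc: "1 \<le> a \<Longrightarrow> D (Suc a) = D a + n a div 2"
  unfolding D_def by simp

lemma D_1[simp]: "D (Suc 0) = 0" unfolding D_def by simp
lemma F_11[simp]: "F (Suc 0, Suc 0) = 0" unfolding F_def by simp

lemma D_mono: "a \<le> b \<Longrightarrow> D a \<le> D b"
  unfolding D_def by (rule sum_mono2) auto

lemma D_step: "1 \<le> a \<Longrightarrow> a < b \<Longrightarrow> D a + n a div 2 \<le> D b"
  using D_Suc D_mono by (metis Suc_leI)

lemma D_pos: "2 \<le> a \<Longrightarrow> 1 \<le> D a"
proof -
  assume "2 \<le> a"
  then have "D 2 \<le> D a" by (rule D_mono)
  moreover have "D 2 = n 1 div 2" using D_Suc[of 1] D_1 by (simp add: numeral_2_eq_2)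
  moreover have "n 1 div 2 \<ge> 1" using n_eq[of 1] m2 by auto
  ultimately show ?thesis by auto
qed

lemma rep_ge2: "2 \<le> j \<Longrightarrow> occ_rep n (i,j) = (i,j)"
  unfolding occ_rep_def by auto
lemma rep_1: "occ_rep n (1,j) = (1,j)"
  unfolding occ_rep_def by auto
lemma rep_i1: "2 \<le> i \<Longrightarrow> i \<le> Suc m \<Longrightarrow> occ_rep n (i,1) = (i-1, n (i-1) div 2 + 2)"
proof -
  assume a: "2 \<le> i" "i \<le> Suc m"
  have "n (i-1) = 2 * (n (i-1) div 2) + 1" using n_eq[of "i-1"] a by auto
  then have "(n (i-1) + 1) div 2 + 1 = n (i-1) div 2 + 2" by presburger
  then show ?thesis unfolding occ_rep_def using a by auto
qed

lemma F_rep: "1 \<le> i \<Longrightarrow> i \<le> m \<Longrightarrow> 1 \<le> j \<Longrightarrow> j \<le> n i \<Longrightarrow> F (occ_rep n (i,j)) = F (i,j)"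
proof -
  assume a: "1 \<le> i" "i \<le> m" "1 \<le> j" "j \<le> n i"
  show ?thesis
  proof (cases "2 \<le> i \<and> j = 1")
    case True
    then have r: "occ_rep n (i,j) = (i-1, n (i-1) div 2 + 2)" using rep_i1 a by auto
    have ne: "n (i-1) = 2 * (n (i-1) div 2) + 1" using n_eq[of "i-1"] a True by auto
    have "D i = D (i-1) + n (i-1) div 2" using D_Suc[of "i-1"] True by auto
    then show ?thesis unfolding r F_def using True ne by (simp add: min_def) arith
  next
    case False
    then have "occ_rep n (i,j) = (i,j)" unfolding occ_rep_def by auto
    then show ?thesis by simp
  qed
qed

lemma cyc_F: "1 \<le> i \<Longrightarrow> i \<le> m \<Longrightarrow> 1 \<le> j \<Longrightarrow> j \<le> n i \<Longrightarrow>
   F (i,j) \<le> F (i, j mod n i + 1) + 1 \<and> F (i, j mod n i + 1) \<le> F (i,j) + 1"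
proof -
  assume a: "1 \<le> i" "i \<le> m" "1 \<le> j" "j \<le> n i"
  show ?thesis
  proof (cases "j < n i")
    case True
    then show ?thesis unfolding F_def using a by (simp add: min_def) arith
  next
    case False
    then have "j = n i" using a by auto
    then show ?thesis unfolding F_def using n_eq[of i] a by simp
  qed
qed

lemma edge_F: "occ_edge m n u v \<Longrightarrow> F u \<le> F v + 1"
proof -
  have c: "occ_cycle_edge m n x y \<Longrightarrow> F x \<le> F y + 1 \<and> F y \<le> F x + 1" for x y
  proof -
    assume "occ_cycle_edge m n x y"
    then obtain i j where ij: "1 \<le> i" "i \<le> m" "1 \<le> j" "j \<le> n i"
      "x = occ_rep n (i, j)" "y = occ_rep n (i, j mod n i + 1)"
      unfolding occ_cycle_edge_def by auto
    have "n i > 0" using ij by auto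
    then have "j mod n i + 1 \<le> n i" using mod_less_divisor[of "n i" j] by linarith
    then have "F y = F (i, j mod n i + 1)" using ij F_rep by auto
    moreover have "F x = F (i,j)" using ij F_rep by auto
    ultimately show ?thesis using cyc_F[OF ij(1-4)] by simp
  qed
  assume "occ_edge m n u v"
  then show ?thesis unfolding occ_edge_def using c by blast
qed

lemma walk_F: "walk (occ_edge m n) k u v \<Longrightarrow> F u \<le> k + F v"
  by (induction rule: walk.induct) (use edge_F in force)+

definition canon where "canon p \<longleftrightarrow> 1 \<le> fst p \<and> fst p \<le> m \<and> 1 \<le> snd p \<and> snd p \<le> n (fst p)
   \<and> (2 \<le> fst p \<longrightarrow> 2 \<le> snd p)"

lemma canon_rep: "1 \<le> i \<Longrightarrow> i \<le> m \<Longrightarrow> 1 \<le> j \<Longrightarrow> j \<le> n i \<Longrightarrow> canon (occ_rep n (i,j))"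
proof (cases "2 \<le> i \<and> j = 1")
  case True
  assume a: "1 \<le> i" "i \<le> m" "1 \<le> j" "j \<le> n i"
  have "occ_rep n (i,j) = (i-1, n (i-1) div 2 + 2)" using rep_i1 True a by auto
  moreover have "n (i-1) = 2 * (n (i-1) div 2) + 1 \<and> n (i-1) div 2 \<ge> 1" using n_eq[of "i-1"] a True by auto
  ultimately show ?thesis unfolding canon_def using a True by auto
next
  case False
  assume a: "1 \<le> i" "i \<le> m" "1 \<le> j" "j \<le> n i"
  have "occ_rep n (i,j) = (i,j)" unfolding occ_rep_def using False by auto
  then show ?thesis unfolding canon_def using a False by auto
qed

lemma canon_self: "canon p \<Longrightarrow> occ_rep n p = p"
  unfolding canon_def occ_rep_def by (auto split: prod.splits)

lemma V_canon: "v \<in> occ_vertices m n \<longleftrightarrow> canon v"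
proof
  assume "v \<in> occ_vertices m n"
  then show "canon v" unfolding occ_vertices_def using canon_rep by auto
next
  assume c: "canon v"
  then have "v = occ_rep n (fst v, snd v)" using canon_self by simp
  then show "v \<in> occ_vertices m n" unfolding occ_vertices_def using c unfolding canon_def by auto
qed

lemma E_sym: "occ_edge m n u v \<Longrightarrow> occ_edge m n v u"
  unfolding occ_edge_def by auto

lemma cyc_edge: "1 \<le> i \<Longrightarrow> i \<le> m \<Longrightarrow> 1 \<le> j \<Longrightarrow> j \<le> n i \<Longrightarrow>
   occ_edge m n (occ_rep n (i,j)) (occ_rep n (i, j mod n i + 1))"
  unfolding occ_edge_def occ_cycle_edge_def by blast

lemma descent: assumes c: "canon (i,j)" and pos: "F (i,j) > 0"
  shows "\<exists>i' j'. 1 \<le> i' \<and> i' \<le> m \<and> 1 \<le> j' \<and> j' \<le> n i' \<and>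
     occ_edge m n (i,j) (occ_rep n (i',j')) \<and> F (i',j') = F (i,j) - 1"
proof -
  have a: "1 \<le> i" "i \<le> m" "1 \<le> j" "j \<le> n i" using c unfolding canon_def by auto
  have ne: "n i = 2 * (n i div 2) + 1" "n i div 2 \<ge> 1" using n_eq a by auto
  have j2: "2 \<le> j"
  proof (rule ccontr)
    assume "\<not> 2 \<le> j"
    then have "j = 1" "i = 1" using a c unfolding canon_def by auto
    then show False using pos unfolding F_def by (simp add: D_1)
  qed
  have ij: "occ_rep n (i,j) = (i,j)" using rep_ge2 j2 by auto
  show ?thesis
  proof (cases "j \<le> n i div 2 + 1")
    case True
    have "(j - 1) mod n i + 1 = j" using a j2 by simp
    then have "occ_edge m n (occ_rep n (i,j-1)) (i,j)" using cyc_edge[of i "j-1"] a j2 ij by auto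
    then have e: "occ_edge m n (i,j) (occ_rep n (i,j-1))" by (rule E_sym)
    have "F (i,j-1) = F (i,j) - 1" unfolding F_def using True ne j2 by (simp add: min_def) arith
    then show ?thesis using e a j2 by (intro exI[of _ i] exI[of _ "j-1"]) auto
  next
    case False
    show ?thesis
    proof (cases "j < n i")
      case True
      have "j mod n i + 1 = j + 1" using True by simp
      then have e: "occ_edge m n (i,j) (occ_rep n (i,j+1))" using cyc_edge[of i j] a ij by auto
      have "F (i,j+1) = F (i,j) - 1" unfolding F_def using True False ne j2 by (simp add: min_def) arith
      then show ?thesis using e a True by (intro exI[of _ i] exI[of _ "j+1"]) auto
    next
      case False
      then have jn: "j = n i" using a by auto
      then have "j mod n i + 1 = 1" by simp
      then have e: "occ_edge m n (i,j) (occ_rep n (i,1))" using cyc_edge[of i j] a ij by auto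
      have "F (i,1) = F (i,j) - 1" unfolding F_def using jn ne by (simp add: min_def) arith
      then show ?thesis using e a by (intro exI[of _ i] exI[of _ "1"]) auto
    qed
  qed
qed

lemma F_zero: "canon v \<Longrightarrow> F v = 0 \<Longrightarrow> v = (1,1)"
proof -
  assume c: "canon v" and z: "F v = 0"
  obtain i j where v: "v = (i,j)" by force
  have "D i = 0" using z v unfolding F_def by simp
  then have "i = 1" using D_pos[of i] c v unfolding canon_def by (cases "2 \<le> i") auto
  moreover have "min (j - 1) (n i + 1 - j) = 0" using z v unfolding F_def by simp
  ultimately show ?thesis using c v unfolding canon_def by (auto simp: min_def split: if_splits)
qed

lemma walk_to_11: "canon v \<Longrightarrow> walk (occ_edge m n) (F v) v (1,1)"
proof (induction "F v" arbitrary: v)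
  case 0
  then have "v = (1,1)" using F_zero by auto
  then show ?case by (auto intro: walk.intros)
next
  case (Suc N)
  obtain i j where v: "v = (i,j)" by force
  obtain i' j' where w: "1 \<le> i'" "i' \<le> m" "1 \<le> j'" "j' \<le> n i'"
     "occ_edge m n (i,j) (occ_rep n (i',j'))" "F (i',j') = F (i,j) - 1"
    using descent[of i j] Suc.prems Suc.hyps(2) v by auto
  have cw: "canon (occ_rep n (i',j'))" using canon_rep w by auto
  have "F (occ_rep n (i',j')) = N" using F_rep w Suc.hyps(2) v by auto
  moreover obtain a b where ab: "occ_rep n (i',j') = (a,b)" by force
  ultimately have "walk (occ_edge m n) N (occ_rep n (i',j')) (1,1)" using Suc.hyps(1)[of "(a,b)"] cw by auto
  then show ?case using w(5) v Suc.hyps(2)[symmetric] by (auto intro: walk.intros)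
qed

lemma connected: "canon u \<Longrightarrow> canon v \<Longrightarrow> \<exists>k. walk (occ_edge m n) k u v"
proof -
  assume cu: "canon u" and cv: "canon v"
  have w1: "walk (occ_edge m n) (F u) u (1,1)" using walk_to_11 cu by blast
  have "walk (occ_edge m n) (F v) v (1,1)" using walk_to_11 cv by blast
  then have w2: "walk (occ_edge m n) (F v) (1,1) v" by (metis E_sym walk_rev)
  show ?thesis using walk_append[OF w1 w2] by blast
qed

lemma gdist_F: "canon v \<Longrightarrow> gdist (occ_edge m n) v (1,1) = F v"
proof -
  assume c: "canon v"
  have w: "walk (occ_edge m n) (F v) v (1,1)" using walk_to_11 c by auto
  from gdist_walk[OF w] have "gdist (occ_edge m n) v (1,1) \<le> F v"
    and w2: "walk (occ_edge m n) (gdist (occ_edge m n) v (1,1)) v (1,1)" by auto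
  moreover have "F (1::nat,1::nat) = 0" unfolding F_def by (simp add: D_1)
  then have "F v \<le> gdist (occ_edge m n) v (1,1)" using walk_F[OF w2] by simp
  ultimately show ?thesis by auto
qed


definition Q2 where "Q2 = {(i,j). 1 \<le> i \<and> i \<le> m \<and> 2 \<le> j \<and> j \<le> n i div 2 + 1}"

lemma finite_V: "finite (occ_vertices m n)"
proof -
  have "{(i, j). 1 \<le> i \<and> i \<le> m \<and> 1 \<le> j \<and> j \<le> n i} = (SIGMA i:{1..m}. {1..n i})" by auto
  then show ?thesis unfolding occ_vertices_def by simp
qed

lemma Q2_canon: "p \<in> Q2 \<Longrightarrow> canon p"
proof -
  assume "p \<in> Q2"
  then obtain i j where p: "p = (i,j)" "1 \<le> i" "i \<le> m" "2 \<le> j" "j \<le> n i div 2 + 1" unfolding Q2_def by auto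
  have "n i = 2 * (n i div 2) + 1" using n_eq p by auto
  then show ?thesis unfolding canon_def using p by auto
qed

lemma F_bounds: "canon (a,b) \<Longrightarrow> F (a,b) \<le> D a + n a div 2 \<and> (2 \<le> a \<longrightarrow> D a + 1 \<le> F (a,b))"
proof -
  assume c: "canon (a,b)"
  have ne: "n a = 2 * (n a div 2) + 1" using n_eq c unfolding canon_def by auto
  show ?thesis unfolding F_def using c ne unfolding canon_def by (simp add: min_def) arith
qed

lemma inj_F: assumes cu: "canon u" and cv: "canon v" and f: "F u = F v" and q: "u \<in> Q2 \<longleftrightarrow> v \<in> Q2"
  shows "u = v"
proof -
  have gen: "canon (a,b) \<Longrightarrow> canon (a',b') \<Longrightarrow> a \<le> a' \<Longrightarrow> F (a,b) = F (a',b') \<Longrightarrow>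
     ((a,b) \<in> Q2 \<longleftrightarrow> (a',b') \<in> Q2) \<Longrightarrow> (a,b) = (a',b')" for a b a' b'
  proof -
    assume c1: "canon (a,b)" and c2: "canon (a',b')" and le: "a \<le> a'" and fe: "F (a,b) = F (a',b')"
      and qe: "((a,b) \<in> Q2 \<longleftrightarrow> (a',b') \<in> Q2)"
    have aa: "a = a'"
    proof (rule ccontr)
      assume "a \<noteq> a'"
      then have lt: "a < a'" using le by auto
      have a1: "1 \<le> a" using c1 unfolding canon_def by auto
      then have "D a + n a div 2 \<le> D a'" using D_step lt by auto
      moreover have "D a' + 1 \<le> F (a',b')" using F_bounds[OF c2] lt a1 by auto
      moreover have "F (a,b) \<le> D a + n a div 2" using F_bounds[OF c1] by auto
      ultimately show False using fe by auto
    qed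
    have ne: "n a = 2 * (n a div 2) + 1" using n_eq c1 unfolding canon_def by auto
    define k where "k = n a div 2"
    have nk: "n a = 2 * k + 1" using ne k_def by simp
    have a1: "1 \<le> a" "a \<le> m" using c1 unfolding canon_def by auto
    have bb: "1 \<le> b" "b \<le> 2 * k + 1" "1 \<le> b'" "b' \<le> 2 * k + 1" using c1 c2 nk aa unfolding canon_def by auto
    have mm: "min (b - 1) (n a + 1 - b) = min (b' - 1) (n a + 1 - b')" using fe aa unfolding F_def by simp
    have q1: "(a,b) \<in> Q2 \<longleftrightarrow> 2 \<le> b \<and> b \<le> k + 1" unfolding Q2_def k_def using a1 by auto
    have q2: "(a',b') \<in> Q2 \<longleftrightarrow> 2 \<le> b' \<and> b' \<le> k + 1" unfolding Q2_def k_def using a1 aa by auto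
    have gv: "min (x - 1) (n a + 1 - x) = (if 2 \<le> x \<and> x \<le> k + 1 then x - 1 else if x = 1 then 0 else 2 * k + 2 - x)"
      if "1 \<le> x" "x \<le> 2 * k + 1" for x
      using that nk by (simp add: min_def)
    have "b = b'"
    proof (cases "2 \<le> b \<and> b \<le> k + 1")
      case True
      then have "2 \<le> b' \<and> b' \<le> k + 1" using qe q1 q2 by auto
      then have "min (b' - 1) (n a + 1 - b') = b' - 1" using gv[of b'] bb by simp
      moreover have "min (b - 1) (n a + 1 - b) = b - 1" using gv[of b] bb True by simp
      ultimately have "b - 1 = b' - 1" using mm by simp
      then show ?thesis using True bb by arith
    next
      case False
      then have F2: "\<not> (2 \<le> b' \<and> b' \<le> k + 1)" using qe q1 q2 by auto
      have e: "(if b = 1 then 0 else 2 * k + 2 - b) = (if b' = 1 then 0 else 2 * k + 2 - b')"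
      proof -
        have "min (b - 1) (n a + 1 - b) = (if b = 1 then 0 else 2 * k + 2 - b)"
          using gv[of b] bb False by (simp only: if_False)
        moreover have "min (b' - 1) (n a + 1 - b') = (if b' = 1 then 0 else 2 * k + 2 - b')"
          using gv[of b'] bb F2 by (simp only: if_False)
        ultimately show ?thesis using mm by simp
      qed
      show ?thesis
        using e bb by (simp split: if_splits)
    qed
    then show ?thesis using aa by simp
  qed
  obtain a b a' b' where uv: "u = (a,b)" "v = (a',b')" by force
  show ?thesis
  proof (cases "a \<le> a'")
    case True
    then show ?thesis using gen cu cv f q uv by auto
  next
    case False
    then show ?thesis using gen[of a' b' a b] cu cv f q uv by auto
  qed
qed

lemma setdist0_iff: "canon u \<Longrightarrow> finite Q \<Longrightarrow> Q \<noteq> {} \<Longrightarrow> (\<And>q. q \<in> Q \<Longrightarrow> canon q) \<Longrightarrow>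
   setdist (occ_edge m n) u Q = 0 \<longleftrightarrow> u \<in> Q"
  using setdist_mem setdist_zero connected by metis


lemma less3: "(i::nat) < 3 \<longleftrightarrow> i = 0 \<or> i = 1 \<or> i = 2" by auto

lemma resolving3: "resolving_partition (occ_vertices m n) (occ_edge m n)
   [{(1,1)}, Q2, occ_vertices m n - ({(1,1)} \<union> Q2)]"
proof -
  define V where "V = occ_vertices m n"
  define Q3 where "Q3 = V - ({(1,1)} \<union> Q2)"
  have cV: "\<And>v. v \<in> V \<longleftrightarrow> canon v" unfolding V_def using V_canon by auto
  have ne1: "n 1 = 2 * (n 1 div 2) + 1" "n 1 div 2 \<ge> 1" using n_eq[of 1] m2 by auto
  have c11: "canon (1,1)" unfolding canon_def using ne1 m2 by auto
  have q12: "(1,2) \<in> Q2" unfolding Q2_def using ne1 m2 by auto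
  have q3: "(1, n 1 div 2 + 2) \<in> Q3" unfolding Q3_def Q2_def using cV ne1 m2 unfolding canon_def by auto
  have Q2V: "Q2 \<subseteq> V" using Q2_canon cV by auto
  have fV: "finite V" unfolding V_def by (rule finite_V)
  have fQ2: "finite Q2" using Q2V fV finite_subset by auto
  have fQ3: "finite Q3" unfolding Q3_def using fV by auto
  have n11: "(1,1) \<notin> Q2" unfolding Q2_def by auto
  have d: "\<forall>i<length [{(1,1)}, Q2, Q3]. \<forall>j<length [{(1,1)}, Q2, Q3]. i \<noteq> j \<longrightarrow>
      [{(1,1)}, Q2, Q3] ! i \<inter> [{(1,1)}, Q2, Q3] ! j = {}"
  proof (intro allI impI)
    fix i j assume "i < length [{(1::nat,1::nat)}, Q2, Q3]" "j < length [{(1::nat,1::nat)}, Q2, Q3]" "i \<noteq> j"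
    then have "i \<in> {0,1,2}" "j \<in> {0,1,2}" "i \<noteq> j" by auto
    then show "[{(1,1)}, Q2, Q3] ! i \<inter> [{(1,1)}, Q2, Q3] ! j = {}"
      using n11 unfolding Q3_def by auto
  qed
  have op: "ordered_partition V [{(1,1)}, Q2, Q3]"
  proof -
    have "\<forall>Q\<in>set [{(1,1)}, Q2, Q3]. Q \<noteq> {}" using q12 q3 by auto
    moreover have "\<Union>(set [{(1,1)}, Q2, Q3]) = V" using Q2V c11 cV unfolding Q3_def by auto
    ultimately show ?thesis unfolding ordered_partition_def using d by blast
  qed
  have inj: "inj_on (representation (occ_edge m n) [{(1,1)}, Q2, Q3]) V"
  proof (rule inj_onI)
    fix u v assume u: "u \<in> V" and v: "v \<in> V"
      and r: "representation (occ_edge m n) [{(1,1)}, Q2, Q3] u = representation (occ_edge m n) [{(1,1)}, Q2, Q3] v"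
    have cu: "canon u" and cv: "canon v" using u v cV by auto
    from r have r1: "setdist (occ_edge m n) u {(1,1)} = setdist (occ_edge m n) v {(1,1)}"
      and r2: "setdist (occ_edge m n) u Q2 = setdist (occ_edge m n) v Q2"
      unfolding representation_def by auto
    have "F u = F v" using r1 gdist_F cu cv by (simp add: setdist_single)
    moreover have "u \<in> Q2 \<longleftrightarrow> v \<in> Q2"
      using setdist0_iff[OF cu fQ2] setdist0_iff[OF cv fQ2] q12 Q2_canon r2 by auto
    ultimately show "u = v" using inj_F cu cv by auto
  qed
  show ?thesis using op inj unfolding resolving_partition_def V_def Q3_def by simp
qed


lemma s_eq: "1 \<le> j \<Longrightarrow> j \<le> (N::nat) \<Longrightarrow> j mod N + 1 = (if j < N then j + 1 else 1)"
  by auto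

lemma rep_inj: "1 \<le> i \<Longrightarrow> i \<le> m \<Longrightarrow> 1 \<le> p \<Longrightarrow> p \<le> n i \<Longrightarrow> 1 \<le> q \<Longrightarrow> q \<le> n i \<Longrightarrow>
   occ_rep n (i,p) = occ_rep n (i,q) \<Longrightarrow> p = q"
  unfolding occ_rep_def by (auto split: if_splits)

lemma chain_eq: "(\<forall>t. 1 \<le> t \<and> t < N \<longrightarrow> g t = g (Suc t)) \<Longrightarrow> 1 \<le> N \<Longrightarrow> g 1 = (g N :: bool)"
proof (induction N)
  case 0 then show ?case by simp
next
  case (Suc N)
  show ?case
  proof (cases "N = 0")
    case True then show ?thesis by simp
  next
    case False
    then have "g 1 = g N" using Suc by auto
    moreover have "g N = g (Suc N)" using Suc.prems False by auto
    ultimately show ?thesis by simp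
  qed
qed

lemma second_change:
  fixes c :: "nat \<Rightarrow> bool"
  assumes j: "1 \<le> j" "j \<le> N" and ch: "c j \<noteq> c (j mod N + 1)"
  shows "\<exists>j'. 1 \<le> j' \<and> j' \<le> N \<and> j' \<noteq> j \<and> c j' \<noteq> c (j' mod N + 1)"
proof -
  define g where "g t = c ((j - 1 + t) mod N + 1)" for t
  have N0: "N > 0" using j by auto
  have g1: "g 1 = c (j mod N + 1)" unfolding g_def using j by simp
  have "(j - 1 + N) mod N = (j - 1) mod N" by (rule mod_add_self2)
  also have "\<dots> = j - 1" using j by simp
  finally have "(j - 1 + N) mod N = j - 1" .
  then have gN: "g N = c j" unfolding g_def using j by simp
  have "\<exists>t. 1 \<le> t \<and> t < N \<and> g t \<noteq> g (Suc t)"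
  proof (rule ccontr)
    assume "\<not> ?thesis"
    then have "g 1 = g N" using chain_eq[of N g] N0 by auto
    then show False using g1 gN ch by simp
  qed
  then obtain t where t: "1 \<le> t" "t < N" "g t \<noteq> g (Suc t)" by auto
  define j' where "j' = (j - 1 + t) mod N + 1"
  have j'r: "1 \<le> j'" "j' \<le> N" unfolding j'_def using mod_less_divisor[OF N0, of "j-1+t"] by linarith+
  have "j' mod N + 1 = (j - 1 + Suc t) mod N + 1" unfolding j'_def
    by (simp add: mod_Suc_eq)
  then have c2: "c j' \<noteq> c (j' mod N + 1)" using t(3) unfolding g_def j'_def by simp
  have "j' \<noteq> j"
  proof
    assume eq: "j' = j"
    show False
    proof (cases "j - 1 + t < N")
      case True
      then show False using eq t unfolding j'_def by simp
    next
      case False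
      then have "(j - 1 + t) mod N = j - 1 + t - N" using j t
      proof -
        have "(j - 1 + t) mod N = (j - 1 + t - N) mod N" using False by (simp add: le_mod_geq)
        also have "\<dots> = j - 1 + t - N" using j t by (intro mod_less) linarith
        finally show ?thesis .
      qed
      then show False using eq t j False unfolding j'_def by simp
    qed
  qed
  then show ?thesis using j'r c2 by auto
qed


lemma cross: "S \<inter> T = {} \<Longrightarrow> S \<union> T = occ_vertices m n \<Longrightarrow> x \<in> S \<Longrightarrow> y \<in> T \<Longrightarrow>
   occ_edge m n x y \<Longrightarrow> setdist (occ_edge m n) x S = 0 \<and> setdist (occ_edge m n) x T = 1"
proof -
  assume d: "S \<inter> T = {}" and u: "S \<union> T = occ_vertices m n" and x: "x \<in> S" and y: "y \<in> T"
    and e: "occ_edge m n x y"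
  have fV: "finite (occ_vertices m n)" by (rule finite_V)
  have fS: "finite S" "finite T" using u fV by (metis finite_Un)+
  have "x \<in> occ_vertices m n" using x u by auto
  then have cx: "canon x" using V_canon by auto
  have wk: "\<exists>k. walk (occ_edge m n) k x q" if "q \<in> T" for q
  proof -
    have "q \<in> occ_vertices m n" using that u by auto
    then have "canon q" using V_canon by auto
    then show ?thesis using connected cx by auto
  qed
  have "x \<notin> T" using d x by auto
  then show ?thesis using setdist_mem[OF fS(1) x] setdist_one[OF fS(2) _ wk y e] by auto
qed

lemma no2: assumes op: "ordered_partition (occ_vertices m n) [A, B]"
  and inj: "inj_on (representation (occ_edge m n) [A, B]) (occ_vertices m n)"
  shows False
proof -
  define V where "V = occ_vertices m n"
  have dd: "\<forall>i<length [A,B]. \<forall>j<length [A,B]. i \<noteq> j \<longrightarrow> [A,B]!i \<inter> [A,B]!j = {}"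
    using op unfolding ordered_partition_def by blast
  have d: "A \<inter> B = {}" using dd[rule_format, of 0 1] by simp
  have u: "A \<union> B = V" using op unfolding ordered_partition_def V_def by auto
  have nA: "A \<noteq> {}" and nB: "B \<noteq> {}" using op unfolding ordered_partition_def by auto
  have cV: "\<And>v. v \<in> V \<longleftrightarrow> canon v" unfolding V_def using V_canon by auto
  have uA: "x = x'" if "x \<in> A" "x' \<in> A" "y \<in> B" "y' \<in> B" "occ_edge m n x y" "occ_edge m n x' y'" for x x' y y'
  proof -
    have "representation (occ_edge m n) [A, B] x = [0,1]" "representation (occ_edge m n) [A, B] x' = [0,1]"
      using cross[OF d u[unfolded V_def]] that unfolding representation_def by auto
    moreover have "x \<in> V" "x' \<in> V" using that u by auto
    ultimately show ?thesis using inj unfolding V_def by (metis inj_onD)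
  qed
  have uB: "y = y'" if "x \<in> A" "x' \<in> A" "y \<in> B" "y' \<in> B" "occ_edge m n x y" "occ_edge m n x' y'" for x x' y y'
  proof -
    have d': "B \<inter> A = {}" "B \<union> A = occ_vertices m n" using d u V_def by auto
    have "representation (occ_edge m n) [A, B] y = [1,0]" "representation (occ_edge m n) [A, B] y' = [1,0]"
      using cross[OF d'] that E_sym unfolding representation_def by auto
    moreover have "y \<in> V" "y' \<in> V" using that u by auto
    ultimately show ?thesis using inj unfolding V_def by (metis inj_onD)
  qed
  define c where "c i j = (occ_rep n (i,j) \<in> A)" for i j
  have repV: "occ_rep n (i,j) \<in> V" if "1 \<le> i" "i \<le> m" "1 \<le> j" "j \<le> n i" for i j
    using canon_rep that cV by auto
  have step1: "\<exists>i j. 1 \<le> i \<and> i \<le> m \<and> 1 \<le> j \<and> j \<le> n i \<and> c i j \<noteq> c i (j mod n i + 1)"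
  proof (rule ccontr)
    assume "\<not> ?thesis"
    then have H: "\<And>i j. 1 \<le> i \<Longrightarrow> i \<le> m \<Longrightarrow> 1 \<le> j \<Longrightarrow> j \<le> n i \<Longrightarrow> c i j = c i (j mod n i + 1)" by blast
    have a: "1 \<le> j \<longrightarrow> j \<le> n i \<longrightarrow> c i j = c i 1" if "1 \<le> i" "i \<le> m" for i j
    proof (induction j)
      case 0 then show ?case by simp
    next
      case (Suc j)
      show ?case
      proof (cases "j = 0")
        case True then show ?thesis by simp
      next
        case False
        show ?thesis
        proof (intro impI)
          assume "1 \<le> Suc j" "Suc j \<le> n i"
          then have "j mod n i + 1 = Suc j" "1 \<le> j" "j \<le> n i" using False by auto
          then show "c i (Suc j) = c i 1" using H[OF that, of j] Suc.IH by auto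
        qed
      qed
    qed
    have b: "1 \<le> i \<longrightarrow> i \<le> m \<longrightarrow> c i 1 = c 1 1" for i
    proof (induction i)
      case 0 then show ?case by simp
    next
      case (Suc i)
      show ?case
      proof (cases "i = 0")
        case True then show ?thesis by simp
      next
        case False
        show ?thesis
        proof (intro impI)
          assume s: "1 \<le> Suc i" "Suc i \<le> m"
          have ne: "n i = 2 * (n i div 2) + 1 \<and> n i div 2 \<ge> 1" using n_eq[of i] False s by auto
          have "occ_rep n (Suc i, 1) = occ_rep n (i, n i div 2 + 2)"
            using rep_i1[of "Suc i"] rep_ge2[of "n i div 2 + 2" i] False s by auto
          then have "c (Suc i) 1 = c i (n i div 2 + 2)" unfolding c_def by simp
          also have "\<dots> = c i 1" using a[of i "n i div 2 + 2"] False s ne by auto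
          also have "\<dots> = c 1 1" using Suc.IH False s by auto
          finally show "c (Suc i) 1 = c 1 1" .
        qed
      qed
    qed
    have all: "\<And>v. v \<in> V \<Longrightarrow> (v \<in> A) = c 1 1"
    proof -
      fix v assume "v \<in> V"
      then obtain i j where ij: "1 \<le> i" "i \<le> m" "1 \<le> j" "j \<le> n i" "v = occ_rep n (i,j)"
        unfolding V_def occ_vertices_def by auto
      then have "(v \<in> A) = c i j" unfolding c_def by simp
      then show "(v \<in> A) = c 1 1" using a[of i j] b[of i] ij by auto
    qed
    show False
    proof (cases "c 1 1")
      case True
      then have "B \<subseteq> A" using all u by auto
      then show False using d nB by auto
    next
      case False
      then have "A = {}" using all u by auto
      then show False using nA by auto
    qed
  qed
  then obtain i j where ij: "1 \<le> i" "i \<le> m" "1 \<le> j" "j \<le> n i" "c i j \<noteq> c i (j mod n i + 1)" by blast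
  obtain j' where j': "1 \<le> j'" "j' \<le> n i" "j' \<noteq> j" "c i j' \<noteq> c i (j' mod n i + 1)"
    using second_change[of j "n i" "c i"] ij by auto
  have n3: "n i \<ge> 3" using nodd ij by auto
  have sr: "1 \<le> p mod n i + 1 \<and> p mod n i + 1 \<le> n i" if "1 \<le> p" "p \<le> n i" for p
    using that s_eq[of p "n i"] by auto
  let ?x = "\<lambda>p. occ_rep n (i,p)" and ?y = "\<lambda>p. occ_rep n (i, p mod n i + 1)"
  have inAB: "(?x p \<in> A \<and> ?y p \<in> B) \<or> (?x p \<in> B \<and> ?y p \<in> A)"
    if "1 \<le> p" "p \<le> n i" "c i p \<noteq> c i (p mod n i + 1)" for p
  proof -
    have "?x p \<in> V" "?y p \<in> V" using repV ij sr that by auto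
    then show ?thesis using that u unfolding c_def by auto
  qed
  have E: "occ_edge m n (?x p) (?y p) \<and> occ_edge m n (?y p) (?x p)" if "1 \<le> p" "p \<le> n i" for p
    using cyc_edge[of i p] E_sym ij that by auto
  have ri: "\<And>p q. 1 \<le> p \<Longrightarrow> p \<le> n i \<Longrightarrow> 1 \<le> q \<Longrightarrow> q \<le> n i \<Longrightarrow> ?x p = ?x q \<Longrightarrow> p = q"
    using rep_inj ij by blast
  have sj: "j mod n i + 1 = (if j < n i then j + 1 else 1)" "j' mod n i + 1 = (if j' < n i then j' + 1 else 1)"
    using s_eq ij j' by auto
  have Ej: "occ_edge m n (?x j) (?y j)" "occ_edge m n (?y j) (?x j)" using E[OF ij(3,4)] by auto
  have Ej': "occ_edge m n (?x j') (?y j')" "occ_edge m n (?y j') (?x j')" using E[OF j'(1,2)] by auto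
  have sj1: "1 \<le> j mod n i + 1" "j mod n i + 1 \<le> n i" using sr[OF ij(3,4)] by auto
  have sj1': "1 \<le> j' mod n i + 1" "j' mod n i + 1 \<le> n i" using sr[OF j'(1,2)] by auto
  have dj: "(?x j \<in> A \<and> ?y j \<in> B) \<or> (?x j \<in> B \<and> ?y j \<in> A)" using inAB[OF ij(3,4,5)] .
  have dj': "(?x j' \<in> A \<and> ?y j' \<in> B) \<or> (?x j' \<in> B \<and> ?y j' \<in> A)" using inAB[OF j'(1,2,4)] .
  have cross_eq: False if "?x j = ?y j'" "?y j = ?x j'"
  proof -
    have "j = j' mod n i + 1" using ri[OF ij(3,4) sj1' that(1)] .
    then have e1: "j = (if j' < n i then j' + 1 else 1)" using sj(2) by simp
    have "j mod n i + 1 = j'" using ri[OF sj1 j'(1,2) that(2)] .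
    then have e2: "(if j < n i then j + 1 else 1) = j'" using sj(1) by simp
    have r: "3 \<le> n i" "1 \<le> j" "j \<le> n i" "1 \<le> j'" "j' \<le> n i" using n3 ij j' by auto
    show False using e1 e2 r by (auto split: if_split_asm)
  qed
  from dj dj' show False
  proof (elim disjE conjE)
    assume h: "?x j \<in> A" "?y j \<in> B" "?x j' \<in> A" "?y j' \<in> B"
    have "?x j = ?x j'" by (rule uA[OF h(1) h(3) h(2) h(4) Ej(1) Ej'(1)])
    then show False using ri[OF ij(3,4) j'(1,2)] j'(3) by simp
  next
    assume h: "?x j \<in> A" "?y j \<in> B" "?x j' \<in> B" "?y j' \<in> A"
    have "?x j = ?y j'" by (rule uA[OF h(1) h(4) h(2) h(3) Ej(1) Ej'(2)])
    moreover have "?y j = ?x j'" by (rule uB[OF h(1) h(4) h(2) h(3) Ej(1) Ej'(2)])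
    ultimately show False using cross_eq by blast
  next
    assume h: "?x j \<in> B" "?y j \<in> A" "?x j' \<in> A" "?y j' \<in> B"
    have "?y j = ?x j'" by (rule uA[OF h(2) h(3) h(1) h(4) Ej(2) Ej'(1)])
    moreover have "?x j = ?y j'" by (rule uB[OF h(2) h(3) h(1) h(4) Ej(2) Ej'(1)])
    ultimately show False using cross_eq by blast
  next
    assume h: "?x j \<in> B" "?y j \<in> A" "?x j' \<in> B" "?y j' \<in> A"
    have "?y j = ?y j'" by (rule uA[OF h(2) h(4) h(1) h(3) Ej(2) Ej'(2)])
    then have "j mod n i + 1 = j' mod n i + 1" using ri[OF sj1 sj1'] by blast
    then have "(if j < n i then j + 1 else 1) = (if j' < n i then j' + 1 else 1)" using sj by simp
    then show False using ij(3,4) j'(1,2,3) by (auto split: if_split_asm)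
  qed
qed

lemma small: "resolving_partition (occ_vertices m n) (occ_edge m n) P \<Longrightarrow> 3 \<le> length P"
proof (rule ccontr)
  assume r: "resolving_partition (occ_vertices m n) (occ_edge m n) P" and l: "\<not> 3 \<le> length P"
  have op: "ordered_partition (occ_vertices m n) P" and inj: "inj_on (representation (occ_edge m n) P) (occ_vertices m n)"
    using r unfolding resolving_partition_def by auto
  have ne1: "n 1 \<ge> 3" using nodd m2 by auto
  have c11: "canon (1,1)" "canon (1,2)" unfolding canon_def using ne1 m2 by auto
  then have v: "(1,1) \<in> occ_vertices m n" "(1,2) \<in> occ_vertices m n" using V_canon by auto
  consider "P = []" | Q where "P = [Q]" | A B where "P = [A,B]"
  proof -
    have "length P = 0 \<or> length P = Suc 0 \<or> length P = Suc (Suc 0)" using l by linarith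
    then show thesis using that by (auto simp: length_Suc_conv)
  qed
  then show False
  proof cases
    case 1 then show False using op v unfolding ordered_partition_def by auto
  next
    case 2
    then have Q: "Q = occ_vertices m n" using op unfolding ordered_partition_def by auto
    have "representation (occ_edge m n) P (1,1) = [0]" "representation (occ_edge m n) P (1,2) = [0]"
      unfolding representation_def 2 Q using setdist_mem[OF finite_V] v by auto
    then have "(1::nat, 1::nat) = (1, 2)" using inj_onD[OF inj _ v(1) v(2)] by simp
    then show False by simp
  next
    case 3 then show False using no2 op inj by auto
  qed
qed

theorem main: "partition_dimension (occ_vertices m n) (occ_edge m n) = 3"
  unfolding partition_dimension_def
proof (rule Least_equality)
  show "\<exists>P. length P = 3 \<and> resolving_partition (occ_vertices m n) (occ_edge m n) P"
    using resolving3 by (intro exI) auto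
next
  fix y assume "\<exists>P. length P = y \<and> resolving_partition (occ_vertices m n) (occ_edge m n) P"
  then show "3 \<le> y" using small by auto
qed

end

theorem theorem2p5:
  fixes m :: nat and n :: "nat \<Rightarrow> nat"
  assumes "m \<ge> 2"
    and "\<forall>i\<in>{1..m}. odd (n i) \<and> n i \<ge> 3"
  shows "partition_dimension (occ_vertices m n) (occ_edge m n) = 3"
proof -
  interpret occ m n using assms by unfold_locales
  show ?thesis by (rule main)
qed

end
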